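(* Assume $\clubsuit$ (the stick principle stated in the context). Then there is an uncountable almost disjoint family (on a countable set) which contains no uncountable anti-Luzin subfamily and no uncountable Luzin subfamily.
   Context: The principle (stick): there is a family $\mathcal S$ of countable subsets of $\omega_1$ with $|\mathcal S|=\omega_1$ such that every uncountable subset of $\omega_1$ contains some member of $\mathcal S$. An almost disjoint family is a collection of infinite sets whose pairwise intersections are finite. Let $\mathcal A$ be an uncountable almost disjoint family on a countable set $W$. $\mathcal A$ is Luzin iff there is an enumeration $\mathcal A=\{a_\alpha:\alpha<\omega_1\}$ such that for every finite $w\subseteq W$ and every $\alpha<\omega_1$ the set $\{\beta<\alpha: a_\alpha\cap a_\beta\subseteq w\}$ is finite. $\mathcal A$ is anti-Luzin iff for every uncountable $\mathcal B\subseteq\mathcal A$ there are uncountable $\mathcal C,\mathcal D\subseteq\mathcal B$ with $\bigcup\mathcal C\cap\bigcup\mathcal D$ finite. *)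

theory Defs
  imports "HOL-Library.Countable_Set"
begin

text \<open>omega1 is represented by a well-ordered type 'a whose universe is uncountable
  and all of whose proper initial segments are countable (order type omega_1).\<close>

definition omega1_type :: "'a::wellorder itself \<Rightarrow> bool" where
  "omega1_type _ \<longleftrightarrow> uncountable (UNIV :: 'a set) \<and> (\<forall>\<alpha>::'a. countable {\<beta>. \<beta> < \<alpha>})"

definition stick :: "'a::wellorder itself \<Rightarrow> bool" where
  "stick _ \<longleftrightarrow> (\<exists>S :: 'a set set.
      (\<forall>s\<in>S. countable s \<and> infinite s) \<and>
      (\<exists>f. bij_betw f (UNIV :: 'a set) S) \<and>
      (\<forall>X :: 'a set. uncountable X \<longrightarrow> (\<exists>s\<in>S. s \<subseteq> X)))"

definition almost_disjoint :: "'b set \<Rightarrow> 'b set set \<Rightarrow> bool" where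
  "almost_disjoint W A \<longleftrightarrow> A \<subseteq> Pow W \<and> (\<forall>a\<in>A. infinite a) \<and>
      (\<forall>a\<in>A. \<forall>b\<in>A. a \<noteq> b \<longrightarrow> finite (a \<inter> b))"

definition luzin :: "'a::wellorder itself \<Rightarrow> 'b set \<Rightarrow> 'b set set \<Rightarrow> bool" where
  "luzin _ W A \<longleftrightarrow> (\<exists>a :: 'a \<Rightarrow> 'b set. bij_betw a UNIV A \<and>
      (\<forall>w. finite w \<and> w \<subseteq> W \<longrightarrow> (\<forall>\<alpha>. finite {\<beta>. \<beta> < \<alpha> \<and> a \<alpha> \<inter> a \<beta> \<subseteq> w})))"

definition anti_luzin :: "'b set set \<Rightarrow> bool" where
  "anti_luzin A \<longleftrightarrow> (\<forall>B \<subseteq> A. uncountable B \<longrightarrow>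
      (\<exists>C D. C \<subseteq> B \<and> D \<subseteq> B \<and> uncountable C \<and> uncountable D \<and> finite (\<Union>C \<inter> \<Union>D)))"

end

theory Submission
  imports Defs
begin


locale stage =
  fixes h :: "'i \<Rightarrow> nat \<Rightarrow> nat" and I :: "'i set" and T :: "nat \<Rightarrow> 'i set"
    and \<phi> :: "nat \<Rightarrow> 'i" and H :: "nat \<Rightarrow> nat"
  assumes T_sub: "T k \<subseteq> I" and T_inf: "infinite (T k)"
    and \<phi>_surj: "I \<subseteq> range \<phi>" and H_mono: "strict_mono H"
    and H_good: "\<exists>S \<subseteq> T (fst (prod_decode r)). card S = (r+2)*(r+2) \<and> inj_on (\<lambda>i. h i (H r)) S"
begin

definition C :: "(nat \<Rightarrow> nat) \<Rightarrow> nat \<Rightarrow> nat \<Rightarrow> 'i set" where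
  "C p k n = {i \<in> T k. \<forall>m. H k \<le> m \<and> m < n \<longrightarrow> h i m \<noteq> p m}"

definition prot :: "(nat \<Rightarrow> nat) \<Rightarrow> nat \<Rightarrow> nat \<Rightarrow> 'i" where
  "prot p k r = (SOME i. i \<in> C p k (H r) \<and> i \<notin> \<phi> ` {..<r})"

definition Forb :: "(nat \<Rightarrow> nat) \<Rightarrow> nat \<Rightarrow> nat set" where
  "Forb p n = (\<lambda>j. h (\<phi> j) n) ` {j. H j \<le> n} \<union> (\<lambda>(k,r). h (prot p k r) n) ` {(k,r). k \<le> r \<and> H r \<le> n}"

definition Badk :: "(nat \<Rightarrow> nat) \<Rightarrow> nat \<Rightarrow> nat \<Rightarrow> nat set" where
  "Badk p k n = {v. finite {i \<in> C p k n. h i n \<noteq> v}}"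

definition Bad :: "(nat \<Rightarrow> nat) \<Rightarrow> nat \<Rightarrow> nat set" where
  "Bad p n = (\<Union>k\<in>{k. H k \<le> n}. Badk p k n)"

definition nxt :: "(nat \<Rightarrow> nat) \<Rightarrow> nat \<Rightarrow> nat" where
  "nxt p n = (SOME v. v \<notin> Forb p n \<and> v \<notin> Bad p n \<and>
      (\<forall>r. H r = n \<longrightarrow> (\<exists>i\<in>T (fst (prod_decode r)). v = h i n)))"

primrec G :: "nat \<Rightarrow> nat \<Rightarrow> nat" where
  "G 0 = (\<lambda>_. 0)"
| "G (Suc n) = (G n)(n := nxt (G n) n)"

definition g :: "nat \<Rightarrow> nat" where "g n = G (Suc n) n"

lemma C_cong: "(\<And>m. m < n \<Longrightarrow> p m = q m) \<Longrightarrow> C p k n = C q k n"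
  unfolding C_def by auto

lemma prot_cong: "(\<And>m. m < H r \<Longrightarrow> p m = q m) \<Longrightarrow> prot p k r = prot q k r"
  unfolding prot_def using C_cong[of "H r" p q k] by simp

lemma Forb_cong: "(\<And>m. m < n \<Longrightarrow> p m = q m) \<Longrightarrow> Forb p n = Forb q n"
proof -
  assume a: "\<And>m. m < n \<Longrightarrow> p m = q m"
  have "\<And>k r. H r \<le> n \<Longrightarrow> prot p k r = prot q k r"
    by (rule prot_cong) (use a in auto)
  then have "(\<lambda>(k,r). h (prot p k r) n) ` {(k,r). k \<le> r \<and> H r \<le> n} =
             (\<lambda>(k,r). h (prot q k r) n) ` {(k,r). k \<le> r \<and> H r \<le> n}"
    by (intro image_cong) auto
  then show ?thesis unfolding Forb_def by simp
qed

lemma Bad_cong: "(\<And>m. m < n \<Longrightarrow> p m = q m) \<Longrightarrow> Bad p n = Bad q n"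
  unfolding Bad_def Badk_def using C_cong[of n p q] by simp

lemma nxt_cong: "(\<And>m. m < n \<Longrightarrow> p m = q m) \<Longrightarrow> nxt p n = nxt q n"
  unfolding nxt_def using Forb_cong[of n p q] Bad_cong[of n p q] by simp

lemma G_g: "m < n \<Longrightarrow> G n m = g m"
proof (induction n)
  case 0 then show ?case by simp
next
  case (Suc n)
  then show ?case by (cases "m = n") (auto simp: g_def)
qed

lemma g_eq: "g n = nxt g n"
proof -
  have "g n = nxt (G n) n" by (simp add: g_def)
  also have "\<dots> = nxt g n" by (rule nxt_cong) (simp add: G_g)
  finally show ?thesis .
qed

lemma H_le_iff: "H a \<le> H b \<longleftrightarrow> a \<le> b"
  using H_mono by (simp add: strict_mono_less_eq)

lemma H_ge: "j \<le> H j"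
  using H_mono by (simp add: strict_mono_imp_increasing)

lemma fin1: "finite {j. H j \<le> n}"
proof (rule finite_subset[of _ "{..n}"])
  show "{j. H j \<le> n} \<subseteq> {..n}" using H_ge le_trans by blast
qed simp

lemma fin2: "finite {(k,r). k \<le> (r::nat) \<and> H r \<le> n}"
proof (rule finite_subset[of _ "{..n} \<times> {..n}"])
  show "{(k,r). k \<le> (r::nat) \<and> H r \<le> n} \<subseteq> {..n} \<times> {..n}"
  proof
    fix x assume "x \<in> {(k,r). k \<le> (r::nat) \<and> H r \<le> n}"
    then obtain k r where "x = (k,r)" "k \<le> r" "H r \<le> n" by blast
    moreover have "r \<le> H r" by (rule H_ge)
    ultimately show "x \<in> {..n} \<times> {..n}" by auto
  qed
qed simp

lemma Badk_le1:
  assumes "infinite (C p k n)"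
  shows "finite (Badk p k n) \<and> card (Badk p k n) \<le> 1"
proof -
  have eq: "a = b" if "a \<in> Badk p k n" "b \<in> Badk p k n" for a b
  proof (rule ccontr)
    assume "a \<noteq> b"
    then have "C p k n \<subseteq> {i \<in> C p k n. h i n \<noteq> a} \<union> {i \<in> C p k n. h i n \<noteq> b}" by auto
    moreover have "finite ({i \<in> C p k n. h i n \<noteq> a} \<union> {i \<in> C p k n. h i n \<noteq> b})"
      using that unfolding Badk_def by auto
    ultimately show False using assms finite_subset by blast
  qed
  have fin: "finite (Badk p k n)"
  proof (cases "Badk p k n = {}")
    case False
    then obtain a where a: "a \<in> Badk p k n" by auto
    then have "Badk p k n \<subseteq> {a}" using eq by auto
    then show ?thesis using finite_subset by blast
  qed simp
  then show ?thesis using eq card_le_Suc0_iff_eq[OF fin] by auto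
qed

lemma Forb_fin: "finite (Forb p n)"
  unfolding Forb_def using fin1 fin2 by auto

lemma Bad_fin:
  assumes "\<forall>k. H k \<le> n \<longrightarrow> infinite (C p k n)"
  shows "finite (Bad p n)"
  unfolding Bad_def using fin1 Badk_le1 assms by auto

lemma card_bound:
  assumes inv: "\<forall>k. H k \<le> H r \<longrightarrow> infinite (C p k (H r))"
  shows "card (Forb p (H r) \<union> Bad p (H r)) < (r+2)*(r+2)"
proof -
  have e1: "{j. H j \<le> H r} = {..r}" by (auto simp: H_le_iff)
  have s2: "{(k,r'). k \<le> r' \<and> H r' \<le> H r} \<subseteq> {..r} \<times> {..r}" by (auto simp: H_le_iff)
  have c1: "card ((\<lambda>j. h (\<phi> j) (H r)) ` {j. H j \<le> H r}) \<le> r+1"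
    using card_image_le[of "{..r}" "\<lambda>j. h (\<phi> j) (H r)"] e1 by simp
  have "card ((\<lambda>(k,r'). h (prot p k r') (H r)) ` {(k,r'). k \<le> r' \<and> H r' \<le> H r}) \<le> card {(k,r'). k \<le> r' \<and> H r' \<le> H r}"
    by (rule card_image_le) (rule fin2)
  also have "\<dots> \<le> card ({..r} \<times> {..r})" by (rule card_mono[OF _ s2]) simp
  finally have c2: "card ((\<lambda>(k,r'). h (prot p k r') (H r)) ` {(k,r'). k \<le> r' \<and> H r' \<le> H r}) \<le> (r+1)*(r+1)"
    by (simp add: card_cartesian_product)
  have c3: "card (Bad p (H r)) \<le> r+1"
  proof -
    have "card (Bad p (H r)) \<le> (\<Sum>k\<in>{..r}. card (Badk p k (H r)))"
      unfolding Bad_def e1 by (rule card_UN_le) simp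
    also have "\<dots> \<le> (\<Sum>k\<in>{..r}. 1)"
      by (rule sum_mono) (use Badk_le1 inv H_le_iff in auto)
    finally show ?thesis by simp
  qed
  have "card (Forb p (H r) \<union> Bad p (H r)) \<le> card (Forb p (H r)) + card (Bad p (H r))"
    by (rule card_Un_le)
  also have "card (Forb p (H r)) \<le> (r+1) + (r+1)*(r+1)"
    unfolding Forb_def using c1 c2 card_Un_le order_trans add_mono by (smt (verit))
  finally have "card (Forb p (H r) \<union> Bad p (H r)) \<le> (r+1) + (r+1)*(r+1) + (r+1)"
    using c3 by linarith
  moreover have "(r+1) + (r+1)*(r+1) + (r+1) < (r+2)*(r+2)" by simp
  ultimately show ?thesis by linarith
qed

lemma ex_nxt:
  assumes inv: "\<forall>k. H k \<le> n \<longrightarrow> infinite (C p k n)"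
  shows "\<exists>v. v \<notin> Forb p n \<and> v \<notin> Bad p n \<and>
      (\<forall>r. H r = n \<longrightarrow> (\<exists>i\<in>T (fst (prod_decode r)). v = h i n))"
proof (cases "\<exists>r. H r = n")
  case True
  then obtain r where r: "H r = n" by blast
  have uniq: "\<And>r'. H r' = n \<Longrightarrow> r' = r"
    using r H_mono strict_mono_eq by metis
  obtain S where S: "S \<subseteq> T (fst (prod_decode r))" "card S = (r+2)*(r+2)"
      "inj_on (\<lambda>i. h i (H r)) S"
    using H_good by blast
  have cb: "card (Forb p n \<union> Bad p n) < card ((\<lambda>i. h i n) ` S)"
  proof -
    have "card ((\<lambda>i. h i n) ` S) = card S" using card_image[OF S(3)] r by simp
    then show ?thesis using card_bound[where p=p and r=r] inv r S by simp
  qed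
  have "\<not> ((\<lambda>i. h i n) ` S \<subseteq> Forb p n \<union> Bad p n)"
  proof
    assume "(\<lambda>i. h i n) ` S \<subseteq> Forb p n \<union> Bad p n"
    then have "card ((\<lambda>i. h i n) ` S) \<le> card (Forb p n \<union> Bad p n)"
      by (rule card_mono[rotated]) (use Forb_fin Bad_fin inv in auto)
    then show False using cb by simp
  qed
  then obtain i where i: "i \<in> S" "h i n \<notin> Forb p n \<union> Bad p n" by auto
  show ?thesis
    by (rule exI[of _ "h i n"]) (use i S uniq in auto)
next
  case False
  have "finite (Forb p n \<union> Bad p n)" using Forb_fin Bad_fin inv by auto
  then obtain v where "v \<notin> Forb p n \<union> Bad p n"
    using ex_new_if_finite[OF infinite_UNIV_nat] by blast
  then show ?thesis using False by auto
qed

lemma inv: "\<forall>k. H k \<le> n \<longrightarrow> infinite (C g k n)"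
proof (induction n)
  case 0
  have "C g k 0 = T k" for k unfolding C_def by auto
  then show ?case using T_inf by simp
next
  case (Suc n)
  have gn: "g n \<notin> Bad g n"
    using someI_ex[OF ex_nxt[OF Suc.IH]] g_eq[of n] unfolding nxt_def by simp
  show ?case
  proof (intro allI impI)
    fix k assume k: "H k \<le> Suc n"
    show "infinite (C g k (Suc n))"
    proof (cases "H k = Suc n")
      case True
      then have "C g k (Suc n) = T k" unfolding C_def by auto
      then show ?thesis using T_inf by simp
    next
      case False
      then have kn: "H k \<le> n" using k by simp
      have "C g k (Suc n) = {i \<in> C g k n. h i n \<noteq> g n}"
        unfolding C_def using kn less_Suc_eq by auto
      moreover have "infinite {i \<in> C g k n. h i n \<noteq> g n}"
        using gn kn unfolding Bad_def Badk_def by auto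
      ultimately show ?thesis by simp
    qed
  qed
qed

lemma g_prop: "g n \<notin> Forb g n \<and> g n \<notin> Bad g n \<and>
      (\<forall>r. H r = n \<longrightarrow> (\<exists>i\<in>T (fst (prod_decode r)). g n = h i n))"
  using someI_ex[OF ex_nxt[OF inv[of n]]] g_eq[of n] unfolding nxt_def by simp

lemma prot_prop:
  assumes "k \<le> r"
  shows "prot g k r \<in> C g k (H r) \<and> prot g k r \<notin> \<phi> ` {..<r}"
proof -
  have "infinite (C g k (H r))" using inv assms H_le_iff by auto
  then have "infinite (C g k (H r) - \<phi> ` {..<r})" by (simp add: Diff_infinite_finite)
  then have "C g k (H r) - \<phi> ` {..<r} \<noteq> {}" by (metis finite.emptyI)
  then have "\<exists>i. i \<in> C g k (H r) \<and> i \<notin> \<phi> ` {..<r}" by blast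
  then show ?thesis unfolding prot_def by (rule someI_ex)
qed

lemma res_ad: "i \<in> I \<Longrightarrow> finite {n. g n = h i n}"
proof -
  assume "i \<in> I"
  then obtain j where j: "i = \<phi> j" using \<phi>_surj by auto
  have "{n. g n = h i n} \<subseteq> {..<H j}"
  proof
    fix n assume "n \<in> {n. g n = h i n}"
    then have "g n = h (\<phi> j) n" using j by simp
    moreover have "H j \<le> n \<Longrightarrow> h (\<phi> j) n \<in> Forb g n" unfolding Forb_def by auto
    ultimately show "n \<in> {..<H j}" using g_prop[of n] by (cases "H j \<le> n") auto
  qed
  then show ?thesis using finite_subset by blast
qed

lemma res_hit: "infinite {n. \<exists>i\<in>T k. g n = h i n}"
proof -
  have "(\<lambda>j. H (prod_encode (k, j))) ` UNIV \<subseteq> {n. \<exists>i\<in>T k. g n = h i n}"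
  proof
    fix x assume "x \<in> (\<lambda>j. H (prod_encode (k, j))) ` UNIV"
    then obtain j where "x = H (prod_encode (k, j))" by auto
    then show "x \<in> {n. \<exists>i\<in>T k. g n = h i n}"
    proof -
      have "\<exists>i\<in>T (fst (prod_decode (prod_encode (k, j)))). g x = h i x"
        using g_prop[of x] \<open>x = _\<close> by blast
      then show ?thesis by simp
    qed
  qed
  moreover have "inj (\<lambda>j. H (prod_encode (k, j)))"
  proof (rule injI)
    fix x y assume "H (prod_encode (k, x)) = H (prod_encode (k, y))"
    then have "prod_encode (k, x) = prod_encode (k, y)" using H_mono strict_mono_eq by metis
    then show "x = y" by simp
  qed
  ultimately show ?thesis
    by (meson finite_imageD finite_subset infinite_UNIV_nat)
qed

lemma res_avoid: "infinite {i \<in> T k. \<forall>n\<ge>H k. g n \<noteq> h i n}"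
proof -
  have sub: "(\<lambda>r. prot g k r) ` {k..} \<subseteq> {i \<in> T k. \<forall>n\<ge>H k. g n \<noteq> h i n}"
  proof
    fix x assume "x \<in> (\<lambda>r. prot g k r) ` {k..}"
    then obtain r where r: "k \<le> r" "x = prot g k r" by auto
    have C: "x \<in> C g k (H r)" using prot_prop[OF r(1)] r by simp
    have "g n \<noteq> h x n" if n: "H k \<le> n" for n
    proof (cases "n < H r")
      case True then show ?thesis using C n unfolding C_def by auto
    next
      case False
      then have "h x n \<in> Forb g n" unfolding Forb_def using r by force
      then show ?thesis using g_prop[of n] by auto
    qed
    then show "x \<in> {i \<in> T k. \<forall>n\<ge>H k. g n \<noteq> h i n}" using C unfolding C_def by auto
  qed
  have "infinite ((\<lambda>r. prot g k r) ` {k..})"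
  proof
    assume fin: "finite ((\<lambda>r. prot g k r) ` {k..})"
    have "\<forall>x\<in>(\<lambda>r. prot g k r) ` {k..}. \<exists>j. x = \<phi> j"
      using sub T_sub \<phi>_surj by blast
    then obtain jf where jf: "\<forall>x\<in>(\<lambda>r. prot g k r) ` {k..}. x = \<phi> (jf x)" by (rule bchoice[elim_format]) blast
    obtain M where M: "\<forall>x\<in>(\<lambda>r. prot g k r) ` {k..}. jf x < M"
      using fin finite_nat_set_iff_bounded[of "jf ` ((\<lambda>r. prot g k r) ` {k..})"] by auto
    define r where "r = max k M"
    have "prot g k r \<in> (\<lambda>r. prot g k r) ` {k..}" unfolding r_def by auto
    then have "jf (prot g k r) < M" "prot g k r = \<phi> (jf (prot g k r))" using jf M
      by auto
    then have "jf (prot g k r) < r" "prot g k r = \<phi> (jf (prot g k r))" unfolding r_def by auto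
    then have "prot g k r \<in> \<phi> ` {..<r}" by (metis image_eqI lessThan_iff)
    then show False using prot_prop[of k r] unfolding r_def by auto
  qed
  then show ?thesis using sub finite_subset by blast
qed

end

lemma stage_lemma:
  fixes h :: "'i \<Rightarrow> nat \<Rightarrow> nat" and I :: "'i set" and J :: "'i set set"
  assumes cI: "countable I" and ad: "\<And>i j. i\<in>I \<Longrightarrow> j\<in>I \<Longrightarrow> i\<noteq>j \<Longrightarrow> finite {n. h i n = h j n}"
    and cJ: "countable J" and JI: "\<And>X. X\<in>J \<Longrightarrow> X \<subseteq> I \<and> infinite X"
  shows "\<exists>g. (\<forall>i\<in>I. finite {n. g n = h i n}) \<and>
     (\<forall>X\<in>J. infinite {n. \<exists>i\<in>X. g n = h i n} \<and> (\<exists>N. infinite {i\<in>X. \<forall>n\<ge>N. g n \<noteq> h i n}))"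
proof (cases "finite I")
  case True
  have "X \<notin> J" for X
  proof
    assume "X \<in> J"
    then have "X \<subseteq> I" "infinite X" using JI by auto
    then show False using True by (meson finite_subset)
  qed
  then have J0: "J = {}" by auto
  define g where "g n = Suc (\<Sum>i\<in>I. h i n)" for n
  have "h i n < g n" if "i\<in>I" for i n
    unfolding g_def using member_le_sum[of i I "\<lambda>i. h i n"] True that by simp
  then have "\<forall>i\<in>I. {n. g n = h i n} = {}" by (auto simp: order_less_imp_not_eq2)
  then show ?thesis using J0 by (intro exI[of _ g]) simp
next
  case False
  define J' where "J' = insert I J"
  define T where "T = from_nat_into J'"
  have rT: "range T = J'" unfolding T_def J'_def by (rule range_from_nat_into) (use cJ in auto)
  have Tk: "T k \<subseteq> I \<and> infinite (T k)" for k
  proof -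
    have "T k \<in> J'" using rT by auto
    then show ?thesis using JI False unfolding J'_def by auto
  qed
  define \<phi> where "\<phi> = from_nat_into I"
  have rphi: "range \<phi> = I" unfolding \<phi>_def by (rule range_from_nat_into) (use cI False in auto)
  define good where "good r n \<longleftrightarrow> (\<exists>S \<subseteq> T (fst (prod_decode r)). card S = (r+2)*(r+2) \<and> inj_on (\<lambda>i. h i n) S)" for r n
  have ex_good: "\<exists>n>n0. good r n" for r n0
  proof -
    have "infinite (T (fst (prod_decode r)))" using Tk by blast
    from infinite_arbitrarily_large[OF this, of "(r+2)*(r+2)"]
    obtain S where S: "S \<subseteq> T (fst (prod_decode r))" "finite S" "card S = (r+2)*(r+2)"
      by blast
    define P where "P = {(i,j). i\<in>S \<and> j\<in>S \<and> i\<noteq>j}"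
    have finP: "finite P" unfolding P_def by (rule finite_subset[of _ "S \<times> S"]) (use S in auto)
    have "finite (\<Union>(i,j)\<in>P. {n. h i n = h j n})"
    proof (rule finite_UN_I[OF finP])
      fix x assume "x \<in> P"
      then obtain i j where "x = (i,j)" "i\<in>S" "j\<in>S" "i\<noteq>j" unfolding P_def by blast
      moreover have "S \<subseteq> I" using S Tk by blast
      ultimately show "finite (case x of (i,j) \<Rightarrow> {n. h i n = h j n})" using ad by auto
    qed
    then obtain M where M: "\<forall>n\<in>(\<Union>(i,j)\<in>P. {n. h i n = h j n}). n < M"
      using finite_nat_set_iff_bounded by blast
    define n where "n = Suc (max n0 M)"
    have "inj_on (\<lambda>i. h i n) S"
    proof (rule inj_onI)
      fix i j assume ij: "i \<in> S" "j \<in> S" "h i n = h j n"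
      show "i = j"
      proof (rule ccontr)
        assume "i \<noteq> j"
        then have "(i,j) \<in> P" unfolding P_def using ij by auto
        then have "n \<in> (\<Union>(i,j)\<in>P. {n. h i n = h j n})"
          by (rule UN_I) (simp add: ij(3))
        then have "n < M" using M by blast
        then show False unfolding n_def by simp
      qed
    qed
    then have "good r n" unfolding good_def using S by blast
    moreover have "n > n0" unfolding n_def by simp
    ultimately show ?thesis by blast
  qed
  have "\<exists>f. \<forall>r. good r (f r) \<and> f r < f (Suc r)"
  proof (rule dependent_nat_choice)
    show "\<exists>x. good 0 x" using ex_good by blast
    show "\<exists>y. good (Suc r) y \<and> x < y" if "good r x" for x r using ex_good by blast
  qed
  then obtain H where H: "\<And>r. good r (H r)" "\<And>r. H r < H (Suc r)" by blast
  have Hm: "strict_mono H" using H(2) by (simp add: strict_mono_Suc_iff)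
  interpret st: stage h I T \<phi> H
  proof
    show "T k \<subseteq> I" for k using Tk by blast
    show "infinite (T k)" for k using Tk by blast
    show "I \<subseteq> range \<phi>" using rphi by simp
    show "strict_mono H" by (rule Hm)
    show "\<exists>S\<subseteq>T (fst (prod_decode r)). card S = (r + 2) * (r + 2) \<and> inj_on (\<lambda>i. h i (H r)) S" for r
      using H(1)[of r] unfolding good_def by blast
  qed
  have A1: "\<forall>i\<in>I. finite {n. st.g n = h i n}"
  proof
    fix i assume "i \<in> I"
    then show "finite {n. st.g n = h i n}" by (rule st.res_ad)
  qed
  have A2: "infinite {n. \<exists>i\<in>X. st.g n = h i n} \<and> (\<exists>N. infinite {i\<in>X. \<forall>n\<ge>N. st.g n \<noteq> h i n})"
    if X: "X \<in> J" for X
  proof -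
    have "X \<in> range T" using rT X unfolding J'_def by simp
    then obtain k where k: "X = T k" by auto
    have "infinite {n. \<exists>i\<in>T k. st.g n = h i n}" by (rule st.res_hit)
    moreover have "infinite {i\<in>T k. \<forall>n\<ge>H k. st.g n \<noteq> h i n}" by (rule st.res_avoid)
    ultimately show ?thesis unfolding k by blast
  qed
  show ?thesis by (rule exI[of _ st.g]) (use A1 A2 in blast)
qed



definition Pst :: "('a::wellorder \<Rightarrow> 'a set) \<Rightarrow> ('a \<Rightarrow> nat \<Rightarrow> nat) \<Rightarrow> 'a \<Rightarrow> (nat \<Rightarrow> nat) \<Rightarrow> bool" where
  "Pst sf F \<alpha> g \<longleftrightarrow> (\<forall>\<beta><\<alpha>. finite {n. g n = F \<beta> n}) \<and>
     (\<forall>\<eta><\<alpha>. sf \<eta> \<subseteq> {\<beta>. \<beta> < \<alpha>} \<longrightarrow> infinite {n. \<exists>\<beta>\<in>sf \<eta>. g n = F \<beta> n} \<and>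
        (\<exists>N. infinite {\<beta> \<in> sf \<eta>. \<forall>n\<ge>N. g n \<noteq> F \<beta> n}))"

lemma Pst_cong:
  assumes "\<And>\<beta>. \<beta> < \<alpha> \<Longrightarrow> F \<beta> = F' \<beta>"
  shows "Pst sf F \<alpha> g = Pst sf F' \<alpha> g"
proof -
  have 1: "(\<forall>\<beta><\<alpha>. finite {n. g n = F \<beta> n}) = (\<forall>\<beta><\<alpha>. finite {n. g n = F' \<beta> n})"
    using assms by auto
  have 2: "{n. \<exists>\<beta>\<in>sf \<eta>. g n = F \<beta> n} = {n. \<exists>\<beta>\<in>sf \<eta>. g n = F' \<beta> n}
        \<and> (\<forall>N. {\<beta> \<in> sf \<eta>. \<forall>n\<ge>N. g n \<noteq> F \<beta> n} = {\<beta> \<in> sf \<eta>. \<forall>n\<ge>N. g n \<noteq> F' \<beta> n})"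
    if "sf \<eta> \<subseteq> {\<beta>. \<beta> < \<alpha>}" for \<eta>
  proof -
    have e: "\<forall>\<beta>\<in>sf \<eta>. F \<beta> = F' \<beta>" using that assms by auto
    show ?thesis
    proof (intro conjI allI)
      show "{n. \<exists>\<beta>\<in>sf \<eta>. g n = F \<beta> n} = {n. \<exists>\<beta>\<in>sf \<eta>. g n = F' \<beta> n}"
        by (intro Collect_cong bex_cong refl) (simp add: e)
      show "{\<beta> \<in> sf \<eta>. \<forall>n\<ge>N. g n \<noteq> F \<beta> n} = {\<beta> \<in> sf \<eta>. \<forall>n\<ge>N. g n \<noteq> F' \<beta> n}" for N
        using e by auto
    qed
  qed
  have 3: "(\<forall>\<eta><\<alpha>. sf \<eta> \<subseteq> {\<beta>. \<beta> < \<alpha>} \<longrightarrow> infinite {n. \<exists>\<beta>\<in>sf \<eta>. g n = F \<beta> n} \<and>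
        (\<exists>N. infinite {\<beta> \<in> sf \<eta>. \<forall>n\<ge>N. g n \<noteq> F \<beta> n})) =
     (\<forall>\<eta><\<alpha>. sf \<eta> \<subseteq> {\<beta>. \<beta> < \<alpha>} \<longrightarrow> infinite {n. \<exists>\<beta>\<in>sf \<eta>. g n = F' \<beta> n} \<and>
        (\<exists>N. infinite {\<beta> \<in> sf \<eta>. \<forall>n\<ge>N. g n \<noteq> F' \<beta> n}))"
  proof (intro all_cong imp_cong refl)
    fix \<eta> assume "sf \<eta> \<subseteq> {\<beta>. \<beta> < \<alpha>}"
    from 2[OF this] show "(infinite {n. \<exists>\<beta>\<in>sf \<eta>. g n = F \<beta> n} \<and>
        (\<exists>N. infinite {\<beta> \<in> sf \<eta>. \<forall>n\<ge>N. g n \<noteq> F \<beta> n})) =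
        (infinite {n. \<exists>\<beta>\<in>sf \<eta>. g n = F' \<beta> n} \<and>
        (\<exists>N. infinite {\<beta> \<in> sf \<eta>. \<forall>n\<ge>N. g n \<noteq> F' \<beta> n}))" by simp
  qed
  show ?thesis unfolding Pst_def using 1 3 by simp
qed

lemma ex_Pst:
  fixes sf :: "'a::wellorder \<Rightarrow> 'a set" and F :: "'a \<Rightarrow> nat \<Rightarrow> nat"
  assumes seg: "\<And>\<alpha>::'a. countable {\<beta>. \<beta> < \<alpha>}"
    and sfp: "\<And>\<eta>. infinite (sf \<eta>)"
    and IH: "\<And>\<beta>. \<beta> < \<alpha> \<Longrightarrow> Pst sf F \<beta> (F \<beta>)"
  shows "\<exists>g. Pst sf F \<alpha> g"
proof -
  define I where "I = {\<beta>. \<beta> < \<alpha>}"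
  define J where "J = sf ` {\<eta>. \<eta> < \<alpha> \<and> sf \<eta> \<subseteq> I}"
  have ad: "finite {n. F i n = F j n}" if "i \<in> I" "j \<in> I" "i \<noteq> j" for i j
  proof (cases "i < j")
    case True
    then have "finite {n. F j n = F i n}" using IH[of j] that unfolding I_def Pst_def by auto
    then show ?thesis by (simp add: eq_commute)
  next
    case False
    then have "j < i" using that(3) by (simp add: not_less order.order_iff_strict)
    then show ?thesis using IH[of i] that unfolding I_def Pst_def by auto
  qed
  have cJ: "countable J" unfolding J_def using seg[of \<alpha>] by (intro countable_image) (rule countable_subset[of _ "{\<beta>. \<beta> < \<alpha>}"], auto)
  have JI: "X \<subseteq> I \<and> infinite X" if "X \<in> J" for X using that sfp unfolding J_def by auto
  obtain g where g: "\<forall>i\<in>I. finite {n. g n = F i n}"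
     "\<forall>X\<in>J. infinite {n. \<exists>i\<in>X. g n = F i n} \<and> (\<exists>N. infinite {i\<in>X. \<forall>n\<ge>N. g n \<noteq> F i n})"
  proof -
    have "countable I" unfolding I_def by (rule seg)
    from stage_lemma[of I F J, OF this ad cJ JI] show ?thesis using that by blast
  qed
  have "Pst sf F \<alpha> g"
    unfolding Pst_def
  proof (intro conjI allI impI)
    show "finite {n. g n = F \<beta> n}" if "\<beta> < \<alpha>" for \<beta> using g(1) that unfolding I_def by auto
    fix \<eta> assume "\<eta> < \<alpha>" "sf \<eta> \<subseteq> {\<beta>. \<beta> < \<alpha>}"
    then have "sf \<eta> \<in> J" unfolding J_def I_def by auto
    then show "infinite {n. \<exists>\<beta>\<in>sf \<eta>. g n = F \<beta> n}" "\<exists>N. infinite {\<beta> \<in> sf \<eta>. \<forall>n\<ge>N. g n \<noteq> F \<beta> n}"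
      using g(2) by auto
  qed
  then show ?thesis by blast
qed


lemma bounded_countable:
  fixes Z :: "'a::wellorder set"
  assumes unc: "uncountable (UNIV::'a set)" and seg: "\<And>\<alpha>::'a. countable {\<beta>. \<beta> < \<alpha>}"
    and Z: "countable Z"
  shows "\<exists>\<gamma>. \<forall>z\<in>Z. z < \<gamma>"
proof (rule ccontr)
  assume "\<not> (\<exists>\<gamma>. \<forall>z\<in>Z. z < \<gamma>)"
  then have "\<forall>\<gamma>. \<exists>z\<in>Z. \<gamma> \<le> z" by (auto simp: not_less)
  then have "UNIV \<subseteq> (\<Union>z\<in>Z. insert z {\<beta>. \<beta> < z})" by (auto simp: order.order_iff_strict)
  moreover have "countable (\<Union>z\<in>Z. insert z {\<beta>. \<beta> < z})"
    using Z seg by (intro countable_UN) auto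
  ultimately show False using unc countable_subset by blast
qed

lemma big_elem:
  fixes Z :: "'a::wellorder set"
  assumes unc: "uncountable (UNIV::'a set)" and seg: "\<And>\<alpha>::'a. countable {\<beta>. \<beta> < \<alpha>}"
    and Z: "countable Z" and X: "uncountable X"
  shows "\<exists>\<alpha>\<in>X. \<forall>z\<in>Z. z < \<alpha>"
proof -
  obtain \<gamma> where g: "\<forall>z\<in>Z. z < \<gamma>" using bounded_countable[OF unc seg Z] by blast
  have "countable (X \<inter> {\<beta>. \<beta> < \<gamma>})" using seg[of \<gamma>] by (rule countable_subset[rotated]) auto
  then have "X - {\<beta>. \<beta> < \<gamma>} \<noteq> {}" using X
    by (metis Diff_eq_empty_iff Int_absorb2 countable_subset inf_le2 subset_refl)
  then obtain \<alpha> where "\<alpha> \<in> X" "\<not> \<alpha> < \<gamma>" by blast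
  then show ?thesis using g by (metis not_less order_less_le_trans)
qed


theorem theorem0p7:
  assumes "omega1_type TYPE('a::wellorder)"
    and "stick TYPE('a)"
  shows "\<exists>(W :: nat set) (A :: nat set set).
           countable W \<and> almost_disjoint W A \<and> uncountable A \<and>
           (\<forall>B \<subseteq> A. uncountable B \<longrightarrow> \<not> anti_luzin B \<and> \<not> luzin TYPE('a) W B)"
proof -
  from assms(1) have unc: "uncountable (UNIV::'a set)" and seg: "\<And>\<alpha>::'a. countable {\<beta>. \<beta> < \<alpha>}"
    unfolding omega1_type_def by auto
  from assms(2) obtain SS :: "'a set set" and sf where SS: "\<forall>s\<in>SS. countable s \<and> infinite s"
    and bij: "bij_betw sf (UNIV::'a set) SS"
    and gs: "\<forall>X::'a set. uncountable X \<longrightarrow> (\<exists>s\<in>SS. s \<subseteq> X)"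
    unfolding stick_def by blast
  have rsf: "range sf = SS" using bij by (simp add: bij_betw_def)
  have sfin: "sf \<eta> \<in> SS" for \<eta> using rsf by blast
  have sfc: "countable (sf \<eta>)" "infinite (sf \<eta>)" for \<eta> using SS sfin[of \<eta>] by blast+
  have gs': "\<exists>\<eta>. sf \<eta> \<subseteq> X" if unX: "uncountable X" for X
  proof -
    have "\<exists>s\<in>SS. s \<subseteq> X" using gs unX by simp
    then obtain s where s: "s \<in> SS" "s \<subseteq> X" by blast
    then have "s \<in> range sf" using rsf by simp
    then obtain \<eta> where "s = sf \<eta>" by blast
    then show ?thesis using s by blast
  qed
  define R where "R = {(x::'a, y). x < y}"
  define STEP where "STEP = (\<lambda>(F::'a \<Rightarrow> nat \<Rightarrow> nat) \<alpha>. SOME g. Pst sf F \<alpha> g)"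
  define fr where "fr = wfrec R STEP"
  have wfR: "wf R" unfolding R_def by (rule wellorder_class.wf)
  have fr_eq: "fr \<alpha> = (SOME g. Pst sf fr \<alpha> g)" for \<alpha>
  proof -
    have "fr \<alpha> = STEP (cut fr R \<alpha>) \<alpha>" unfolding fr_def by (rule wfrec[OF wfR])
    also have "\<dots> = (SOME g. Pst sf (cut fr R \<alpha>) \<alpha> g)" unfolding STEP_def by simp
    also have "\<dots> = (SOME g. Pst sf fr \<alpha> g)"
    proof -
      have "\<And>g. Pst sf (cut fr R \<alpha>) \<alpha> g = Pst sf fr \<alpha> g"
        by (rule Pst_cong) (simp add: cut_apply R_def)
      then show ?thesis by simp
    qed
    finally show ?thesis .
  qed
  have P: "Pst sf fr \<alpha> (fr \<alpha>)" for \<alpha>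
  proof (induction \<alpha> rule: less_induct)
    case (less \<alpha>)
    have "\<exists>g. Pst sf fr \<alpha> g" by (rule ex_Pst[OF seg sfc(2) less.IH])
    from someI_ex[OF this] show ?case by (simp only: fr_eq[of \<alpha>, symmetric])
  qed
  have ad_all: "finite {n. fr \<alpha> n = fr \<beta> n}" if "\<alpha> \<noteq> \<beta>" for \<alpha> \<beta>
  proof (cases "\<alpha> < \<beta>")
    case True
    then have "finite {n. fr \<beta> n = fr \<alpha> n}" using P[of \<beta>] unfolding Pst_def by auto
    then show ?thesis by (simp add: eq_commute)
  next
    case False
    then have "\<beta> < \<alpha>" using that by (simp add: not_less order.order_iff_strict)
    then show ?thesis using P[of \<alpha>] unfolding Pst_def by auto
  qed
  have Pstep: "infinite {n. \<exists>\<beta>\<in>sf \<eta>. fr \<alpha> n = fr \<beta> n} \<and>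
        (\<exists>N. infinite {\<beta> \<in> sf \<eta>. \<forall>n\<ge>N. fr \<alpha> n \<noteq> fr \<beta> n})"
    if "\<forall>z\<in>insert \<eta> (sf \<eta>). z < \<alpha>" for \<alpha> \<eta>
  proof -
    have "\<eta> < \<alpha>" "sf \<eta> \<subseteq> {\<beta>. \<beta> < \<alpha>}" using that by auto
    moreover have "\<forall>\<eta><\<alpha>. sf \<eta> \<subseteq> {\<beta>. \<beta> < \<alpha>} \<longrightarrow> infinite {n. \<exists>\<beta>\<in>sf \<eta>. fr \<alpha> n = fr \<beta> n} \<and>
        (\<exists>N. infinite {\<beta> \<in> sf \<eta>. \<forall>n\<ge>N. fr \<alpha> n \<noteq> fr \<beta> n})"
      using P[of \<alpha>] unfolding Pst_def by (rule conjunct2)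
    ultimately show ?thesis by blast
  qed
  define a where "a = (\<lambda>\<alpha>. (\<lambda>n. prod_encode (n, fr \<alpha> n)) ` (UNIV::nat set))"
  have enc_inj: "inj (\<lambda>n. prod_encode (n, f n))" for f :: "nat \<Rightarrow> nat" by (auto simp: inj_def)
  have a_inf: "infinite (a \<alpha>)" for \<alpha>
  proof
    assume "finite (a \<alpha>)"
    then have "finite (UNIV::nat set)" unfolding a_def by (rule finite_imageD) (rule enc_inj)
    then show False by simp
  qed
  have a_int: "a \<alpha> \<inter> a \<beta> = (\<lambda>n. prod_encode (n, fr \<alpha> n)) ` {n. fr \<alpha> n = fr \<beta> n}" for \<alpha> \<beta>
  proof (intro equalityI subsetI)
    fix x assume "x \<in> a \<alpha> \<inter> a \<beta>"
    then obtain n m where nm: "x = prod_encode (n, fr \<alpha> n)" "x = prod_encode (m, fr \<beta> m)"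
      unfolding a_def by blast
    have "prod_encode (n, fr \<alpha> n) = prod_encode (m, fr \<beta> m)" using nm(1)[symmetric] nm(2) by (rule trans)
    then have pe: "(n, fr \<alpha> n) = (m, fr \<beta> m)" by (rule iffD1[OF prod_encode_eq])
    have nm': "n = m" using arg_cong[OF pe, of fst] by simp
    have fe: "fr \<alpha> n = fr \<beta> m" using arg_cong[OF pe, of snd] by simp
    have "fr \<alpha> n = fr \<beta> n" using nm' fe by metis
    then show "x \<in> (\<lambda>n. prod_encode (n, fr \<alpha> n)) ` {n. fr \<alpha> n = fr \<beta> n}" using nm by blast
  next
    fix x assume "x \<in> (\<lambda>n. prod_encode (n, fr \<alpha> n)) ` {n. fr \<alpha> n = fr \<beta> n}"
    then obtain n where n: "fr \<alpha> n = fr \<beta> n" "x = prod_encode (n, fr \<alpha> n)" by blast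
    then have "x = prod_encode (n, fr \<beta> n)" by simp
    then show "x \<in> a \<alpha> \<inter> a \<beta>" unfolding a_def using n by blast
  qed
  have a_inj: "inj a"
  proof (rule injI)
    fix \<alpha> \<beta> assume eq: "a \<alpha> = a \<beta>"
    show "\<alpha> = \<beta>"
    proof (rule ccontr)
      assume "\<alpha> \<noteq> \<beta>"
      then have "finite (a \<alpha> \<inter> a \<beta>)" unfolding a_int using ad_all by blast
      then show False using eq a_inf by simp
    qed
  qed
  define A where "A = range a"
  have unc_pre: "uncountable (a -` B)" "B = a ` (a -` B)" if "B \<subseteq> A" "uncountable B" for B
  proof -
    show e: "B = a ` (a -` B)" using that(1) unfolding A_def by auto
    show "uncountable (a -` B)"
    proof
      assume "countable (a -` B)"
      then have "countable (a ` (a -` B))" by (rule countable_image)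
      then show False using that(2) e by simp
    qed
  qed
  show ?thesis
  proof (intro exI[of _ "UNIV::nat set"] exI[of _ A] conjI allI impI)
    show "countable (UNIV::nat set)" by simp
    show "almost_disjoint UNIV A" unfolding almost_disjoint_def
    proof (intro conjI ballI impI)
      show "A \<subseteq> Pow UNIV" by simp
      show "infinite x" if "x \<in> A" for x using that a_inf unfolding A_def by auto
      fix x y assume "x \<in> A" "y \<in> A" "x \<noteq> y"
      then obtain \<alpha> \<beta> where "x = a \<alpha>" "y = a \<beta>" "\<alpha> \<noteq> \<beta>" unfolding A_def by auto
      then show "finite (x \<inter> y)" using a_int[of \<alpha> \<beta>] ad_all[of \<alpha> \<beta>] by simp
    qed
    show "uncountable A"
    proof
      assume "countable A"
      then have "countable (UNIV::'a set)" unfolding A_def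
        using countable_image_inj_on[of a UNIV] a_inj by simp
      then show False using unc by simp
    qed
    fix B assume B: "B \<subseteq> A" "uncountable B"
    show "\<not> anti_luzin B"
    proof
      assume "anti_luzin B"
      then have h: "B \<subseteq> B \<longrightarrow> uncountable B \<longrightarrow> (\<exists>C D. C \<subseteq> B \<and> D \<subseteq> B \<and> uncountable C \<and> uncountable D \<and> finite (\<Union>C \<inter> \<Union>D))"
        unfolding anti_luzin_def by (rule spec)
      obtain C D where CD: "C \<subseteq> B" "D \<subseteq> B" "uncountable C" "uncountable D"
          "finite (\<Union>C \<inter> \<Union>D)"
        using h B(2) by blast
      have CA: "C \<subseteq> A" and DA: "D \<subseteq> A" using CD B by auto
      obtain \<eta> where eta: "sf \<eta> \<subseteq> a -` D" using gs'[OF unc_pre(1)[OF DA CD(4)]] by blast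
      have ci: "countable (insert \<eta> (sf \<eta>))" using sfc(1) by simp
      from big_elem[OF unc seg ci unc_pre(1)[OF CA CD(3)]]
      obtain \<alpha> where al: "\<alpha> \<in> a -` C" "\<forall>z\<in>insert \<eta> (sf \<eta>). z < \<alpha>" by blast
      have L: "infinite {n. \<exists>\<beta>\<in>sf \<eta>. fr \<alpha> n = fr \<beta> n}"
        using Pstep[OF al(2)] by blast
      have "(\<lambda>n. prod_encode (n, fr \<alpha> n)) ` {n. \<exists>\<beta>\<in>sf \<eta>. fr \<alpha> n = fr \<beta> n} \<subseteq> \<Union>C \<inter> \<Union>D"
      proof
        fix x assume "x \<in> (\<lambda>n. prod_encode (n, fr \<alpha> n)) ` {n. \<exists>\<beta>\<in>sf \<eta>. fr \<alpha> n = fr \<beta> n}"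
        then obtain n \<beta> where x: "x = prod_encode (n, fr \<alpha> n)" "\<beta> \<in> sf \<eta>" "fr \<alpha> n = fr \<beta> n" by blast
        have "x \<in> a \<alpha>" unfolding a_def using x(1) by blast
        moreover have "x = prod_encode (n, fr \<beta> n)" using x(1) x(3) by metis
        then have "x \<in> a \<beta>" unfolding a_def by blast
        moreover have "a \<alpha> \<in> C" "a \<beta> \<in> D" using al(1) eta x(2) by auto
        ultimately show "x \<in> \<Union>C \<inter> \<Union>D" by blast
      qed
      moreover have "infinite ((\<lambda>n. prod_encode (n, fr \<alpha> n)) ` {n. \<exists>\<beta>\<in>sf \<eta>. fr \<alpha> n = fr \<beta> n})"
      proof
        assume "finite ((\<lambda>n. prod_encode (n, fr \<alpha> n)) ` {n. \<exists>\<beta>\<in>sf \<eta>. fr \<alpha> n = fr \<beta> n})"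
        then have "finite {n. \<exists>\<beta>\<in>sf \<eta>. fr \<alpha> n = fr \<beta> n}"
          by (rule finite_imageD) (rule inj_on_subset[OF enc_inj subset_UNIV])
        then show False using L by simp
      qed
      ultimately show False using finite_subset CD(5) by blast
    qed
    show "\<not> luzin TYPE('a) UNIV B"
    proof
      assume "luzin TYPE('a) UNIV B"
      then obtain e :: "'a \<Rightarrow> nat set" where e: "bij_betw e UNIV B"
        and lz: "\<And>w \<gamma>. finite w \<Longrightarrow> finite {\<delta>. \<delta> < \<gamma> \<and> e \<gamma> \<inter> e \<delta> \<subseteq> w}"
        unfolding luzin_def by blast
      define ie where "ie = inv e"
      have re: "range e = B" using e by (simp add: bij_betw_def)
      have eie: "e (ie y) = y" if "y \<in> B" for y unfolding ie_def using f_inv_into_f[of y e UNIV] that re by simp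
      have ieinj: "inj_on ie B" unfolding ie_def using inj_on_inv_into[of B e UNIV] re by simp
      define X where "X = a -` B"
      have Xu: "uncountable X" unfolding X_def by (rule unc_pre(1)[OF B])
      obtain \<eta> where eta: "sf \<eta> \<subseteq> X" using gs'[OF Xu] by blast
      have injX: "inj_on (\<lambda>\<beta>. ie (a \<beta>)) X"
      proof (rule inj_onI)
        fix x y assume "x \<in> X" "y \<in> X" "ie (a x) = ie (a y)"
        then have "a x = a y" using ieinj unfolding X_def by (auto dest: inj_onD)
        then show "x = y" using a_inj by (auto dest: injD)
      qed
      have "countable ((\<lambda>\<beta>. ie (a \<beta>)) ` sf \<eta>)" using sfc(1)[of \<eta>] by simp
      from bounded_countable[OF unc seg this]
      obtain \<gamma>0 where g0: "\<forall>z\<in>(\<lambda>\<beta>. ie (a \<beta>)) ` sf \<eta>. z < \<gamma>0" by blast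
      have cnt: "countable {\<alpha>\<in>X. ie (a \<alpha>) < \<gamma>0}"
      proof (rule countable_image_inj_on)
        show "countable ((\<lambda>\<beta>. ie (a \<beta>)) ` {\<alpha>\<in>X. ie (a \<alpha>) < \<gamma>0})"
          by (rule countable_subset[OF _ seg[of \<gamma>0]]) auto
        show "inj_on (\<lambda>\<beta>. ie (a \<beta>)) {\<alpha>\<in>X. ie (a \<alpha>) < \<gamma>0}" using injX by (rule inj_on_subset) auto
      qed
      have X2: "uncountable (X - {\<alpha>\<in>X. ie (a \<alpha>) < \<gamma>0})"
      proof
        assume "countable (X - {\<alpha>\<in>X. ie (a \<alpha>) < \<gamma>0})"
        then have "countable ((X - {\<alpha>\<in>X. ie (a \<alpha>) < \<gamma>0}) \<union> {\<alpha>\<in>X. ie (a \<alpha>) < \<gamma>0})"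
          using cnt by (rule countable_Un)
        moreover have "(X - {\<alpha>\<in>X. ie (a \<alpha>) < \<gamma>0}) \<union> {\<alpha>\<in>X. ie (a \<alpha>) < \<gamma>0} = X" by auto
        ultimately have "countable X" by simp
        then show False using Xu by simp
      qed
      have ci: "countable (insert \<eta> (sf \<eta>))" using sfc(1) by simp
      from big_elem[OF unc seg ci X2]
      obtain \<alpha> where al: "\<alpha> \<in> X - {\<alpha>\<in>X. ie (a \<alpha>) < \<gamma>0}" "\<forall>z\<in>insert \<eta> (sf \<eta>). z < \<alpha>" by blast
      define \<gamma> where "\<gamma> = ie (a \<alpha>)"
      have gg: "\<gamma>0 \<le> \<gamma>" using al(1) unfolding \<gamma>_def by (auto simp: not_less)
      have aB: "a \<alpha> \<in> B" using al(1) unfolding X_def by auto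
      have egam: "e \<gamma> = a \<alpha>" unfolding \<gamma>_def using eie[OF aB] .
      obtain N where N: "infinite {\<beta> \<in> sf \<eta>. \<forall>n\<ge>N. fr \<alpha> n \<noteq> fr \<beta> n}"
        using Pstep[OF al(2)] by blast
      define w where "w = (\<lambda>n. prod_encode (n, fr \<alpha> n)) ` {..<N}"
      have "(\<lambda>\<beta>. ie (a \<beta>)) ` {\<beta> \<in> sf \<eta>. \<forall>n\<ge>N. fr \<alpha> n \<noteq> fr \<beta> n} \<subseteq> {\<delta>. \<delta> < \<gamma> \<and> e \<gamma> \<inter> e \<delta> \<subseteq> w}"
      proof
        fix x assume "x \<in> (\<lambda>\<beta>. ie (a \<beta>)) ` {\<beta> \<in> sf \<eta>. \<forall>n\<ge>N. fr \<alpha> n \<noteq> fr \<beta> n}"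
        then obtain \<beta> where b: "x = ie (a \<beta>)" "\<beta> \<in> sf \<eta>" "\<forall>n\<ge>N. fr \<alpha> n \<noteq> fr \<beta> n" by blast
        have "x < \<gamma>0" using g0 b by auto
        then have "x < \<gamma>" using gg by simp
        moreover have "a \<beta> \<in> B" using b(2) eta unfolding X_def by auto
        then have "e x = a \<beta>" using b(1) eie by simp
        moreover have "a \<alpha> \<inter> a \<beta> \<subseteq> w"
        proof -
          have "{n. fr \<alpha> n = fr \<beta> n} \<subseteq> {..<N}" using b(3) not_le by auto
          then show ?thesis unfolding a_int w_def by (rule image_mono)
        qed
        ultimately show "x \<in> {\<delta>. \<delta> < \<gamma> \<and> e \<gamma> \<inter> e \<delta> \<subseteq> w}" using egam by simp
      qed
      moreover have "infinite ((\<lambda>\<beta>. ie (a \<beta>)) ` {\<beta> \<in> sf \<eta>. \<forall>n\<ge>N. fr \<alpha> n \<noteq> fr \<beta> n})"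
      proof
        assume "finite ((\<lambda>\<beta>. ie (a \<beta>)) ` {\<beta> \<in> sf \<eta>. \<forall>n\<ge>N. fr \<alpha> n \<noteq> fr \<beta> n})"
        moreover have "inj_on (\<lambda>\<beta>. ie (a \<beta>)) {\<beta> \<in> sf \<eta>. \<forall>n\<ge>N. fr \<alpha> n \<noteq> fr \<beta> n}"
          by (rule inj_on_subset[OF injX]) (use eta in auto)
        ultimately show False using N finite_imageD by blast
      qed
      moreover have "finite w" unfolding w_def by simp
      ultimately show False using lz[of w \<gamma>] finite_subset by blast
    qed
  qed
qed

end
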